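(* Let $\mathcal{Z}\subset\mathbb{R}^n$ be closed, Clarke regular and $\alpha$-prox-regular for some $\alpha>0$, $G:\mathcal{Z}\to\mathbb{S}^n_+$ a continuous metric, and $f:\mathcal{Z}\to\mathbb{R}^n$ a continuous vector field. For $K>0$ consider the anti-windup approximation $$\dot z\in F_K(z):=f(P_\mathcal{Z}(z))-\tfrac1KG^{-1}(P_\mathcal{Z}(z))\big(z-P_\mathcal{Z}(z)\big)$$ and the projected dynamical system $\dot z=\Pi^G_\mathcal{Z}[f](z)$, $z\in\mathcal{Z}$. If $\bar z^\star\in\mathcal{Z}$ is a weak equilibrium of the projected dynamical system, then there exists $K^\star>0$ such that for all $K\in(0,K^\star)$ there exists a weak equilibrium point $z_K^\star\in\bar z^\star+N_{\bar z^\star}\mathcal{Z}\cap\tfrac{1}{2\alpha}\operatorname{int}\mathbb{B}$ of the anti-windup approximation. Conversely, if $z_K^\star\in\mathcal{Z}+\tfrac{1}{2\alpha}\operatorname{int}\mathbb{B}$ is a weak equilibrium of the anti-windup approximation for some $K>0$, then $P_\mathcal{Z}(z_K^\star)$ is a weak equilibrium of the projected dynamical system.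
   Context: $\operatorname{int}\mathbb{B}$ is the open unit ball; $\mathbb{S}^n_+$ the symmetric positive definite matrices; $\|u\|_{G(x)}:=(u^TG(x)u)^{1/2}$. $P_\mathcal{Z}(z)$ is the (possibly set-valued) Euclidean projection onto $\mathcal{Z}$; expressions with it range over its elements. $T_x\mathcal{Z}$ is the tangent cone; Clarke regular means $x\mapsto T_x\mathcal{Z}$ is inner semicontinuous; $N_x\mathcal{Z}$ is the polar of $T_x\mathcal{Z}$; $\alpha$-prox-regular means for all $x\in\mathcal{Z}$, $\eta\in N_x\mathcal{Z}$: $\langle\eta,y-x\rangle\le\alpha\|\eta\|\|y-x\|^2$ for all $y\in\mathcal{Z}$. $\Pi^G_\mathcal{Z}[f](x):=\arg\min_{v\in T_x\mathcal{Z}}\|v-f(x)\|_{G(x)}$. A point $z^\star$ is a weak equilibrium of a system if the constant trajectory $z\equiv z^\star$ is a (Carathéodory) solution of it; for the anti-windup approximation this is equivalent to $0\in F_K(z^\star)$. *)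

theory Defs
  imports "HOL-Analysis.Analysis"
begin

(* Bouligand tangent cone T_x Z (empty if x \<notin> Z) *)
definition tangent_cone :: "(real^'n) set \<Rightarrow> real^'n \<Rightarrow> (real^'n) set" where
  "tangent_cone Z x = {v. x \<in> Z \<and> (\<exists>xs t. (\<forall>k. xs k \<in> Z \<and> t k > 0) \<and>
      xs \<longlonglongrightarrow> x \<and> t \<longlonglongrightarrow> 0 \<and> (\<lambda>k. (1 / t k) *\<^sub>R (xs k - x)) \<longlonglongrightarrow> v)}"

definition normal_cone :: "(real^'n) set \<Rightarrow> real^'n \<Rightarrow> (real^'n) set" where
  "normal_cone Z x = {\<eta>. \<forall>v \<in> tangent_cone Z x. \<eta> \<bullet> v \<le> 0}"

(* Clarke regular: x \<mapsto> T_x Z is inner semicontinuous on Z,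
   i.e. T_x Z \<subseteq> liminf_{y \<rightarrow>_Z x} T_y Z *)
definition clarke_regular :: "(real^'n) set \<Rightarrow> bool" where
  "clarke_regular Z \<longleftrightarrow> (\<forall>x \<in> Z. \<forall>v \<in> tangent_cone Z x. \<forall>e > 0. \<exists>d > 0.
      \<forall>y \<in> Z. dist y x < d \<longrightarrow> (\<exists>w \<in> tangent_cone Z y. dist w v < e))"

definition prox_regular :: "real \<Rightarrow> (real^'n) set \<Rightarrow> bool" where
  "prox_regular \<alpha> Z \<longleftrightarrow> (\<forall>x \<in> Z. \<forall>\<eta> \<in> normal_cone Z x. \<forall>y \<in> Z.
      \<eta> \<bullet> (y - x) \<le> \<alpha> * norm \<eta> * (norm (y - x))\<^sup>2)"

definition proj :: "(real^'n) set \<Rightarrow> real^'n \<Rightarrow> (real^'n) set" where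
  "proj Z z = {p \<in> Z. \<forall>q \<in> Z. dist z p \<le> dist z q}"

definition sym_posdef :: "real^'n^'n \<Rightarrow> bool" where
  "sym_posdef M \<longleftrightarrow> transpose M = M \<and> (\<forall>u. u \<noteq> 0 \<longrightarrow> u \<bullet> (M *v u) > 0)"

definition Gnorm :: "real^'n^'n \<Rightarrow> real^'n \<Rightarrow> real" where
  "Gnorm M u = sqrt (u \<bullet> (M *v u))"

(* projected vector field \<Pi>^G_Z[f](x) = argmin_{v \<in> T_x Z} \<parallel>v - f x\<parallel>_{G x};
   the projected dynamical system is only defined on Z (state constraint) *)
definition proj_field ::
  "(real^'n) set \<Rightarrow> (real^'n \<Rightarrow> real^'n^'n) \<Rightarrow> (real^'n \<Rightarrow> real^'n) \<Rightarrow> real^'n \<Rightarrow> (real^'n) set" where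
  "proj_field Z G f x = (if x \<in> Z then
      {v \<in> tangent_cone Z x. \<forall>w \<in> tangent_cone Z x. Gnorm (G x) (v - f x) \<le> Gnorm (G x) (w - f x)}
    else {})"

definition antiwindup ::
  "(real^'n) set \<Rightarrow> (real^'n \<Rightarrow> real^'n^'n) \<Rightarrow> (real^'n \<Rightarrow> real^'n) \<Rightarrow> real \<Rightarrow> real^'n \<Rightarrow> (real^'n) set" where
  "antiwindup Z G f K z = {f p - (1 / K) *\<^sub>R (matrix_inv (G p) *v (z - p)) | p. p \<in> proj Z z}"

definition abs_cont_on :: "real set \<Rightarrow> (real \<Rightarrow> 'a::real_normed_vector) \<Rightarrow> bool" where
  "abs_cont_on I x \<longleftrightarrow> (\<forall>e > 0. \<exists>d > 0. \<forall>D. finite D \<longrightarrow>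
      (\<forall>(a, b) \<in> D. a < b \<and> {a..b} \<subseteq> I) \<longrightarrow>
      pairwise (\<lambda>(a, b) (c, d). {a<..<b} \<inter> {c<..<d} = {}) D \<longrightarrow>
      (\<Sum>(a, b) \<in> D. b - a) < d \<longrightarrow> (\<Sum>(a, b) \<in> D. norm (x b - x a)) < e)"

definition caratheodory_solution :: "('a::euclidean_space \<Rightarrow> 'a set) \<Rightarrow> (real \<Rightarrow> 'a) \<Rightarrow> bool" where
  "caratheodory_solution F z \<longleftrightarrow> (\<forall>T \<ge> 0. abs_cont_on {0..T} z) \<and>
     (AE t in lebesgue. t \<ge> 0 \<longrightarrow> (\<exists>v. (z has_vector_derivative v) (at t) \<and> v \<in> F (z t)))"

definition weak_equilibrium :: "('a::euclidean_space \<Rightarrow> 'a set) \<Rightarrow> 'a \<Rightarrow> bool" where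
  "weak_equilibrium F z \<longleftrightarrow> caratheodory_solution F (\<lambda>t. z)"

end

theory Submission
  imports Defs
begin

lemma weq_iff:
  fixes F :: "'a::euclidean_space \<Rightarrow> 'a set"
  shows "weak_equilibrium F z \<longleftrightarrow> 0 \<in> F z"
proof
  assume "0 \<in> F z"
  then show "weak_equilibrium F z"
    unfolding weak_equilibrium_def caratheodory_solution_def abs_cont_on_def
    by (auto intro!: always_eventually has_vector_derivative_const)
next
  assume "weak_equilibrium F z"
  then have ae: "AE t in lebesgue. t \<ge> 0 \<longrightarrow> (\<exists>v. ((\<lambda>t. z) has_vector_derivative v) (at t) \<and> v \<in> F z)"
    unfolding weak_equilibrium_def caratheodory_solution_def by blast
  show "0 \<in> F z"
  proof (rule ccontr)
    assume n: "0 \<notin> F z"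
    have "AE t in lebesgue. \<not> (t::real) \<ge> 0"
      using ae
    proof (rule eventually_mono)
      fix t assume h: "t \<ge> 0 \<longrightarrow> (\<exists>v. ((\<lambda>t. z) has_vector_derivative v) (at t) \<and> v \<in> F z)"
      show "\<not> t \<ge> 0"
      proof
        assume "t \<ge> 0"
        then obtain v where v: "((\<lambda>t. z) has_vector_derivative v) (at t)" "v \<in> F z" using h by blast
        have "v = 0" using vector_derivative_unique_at[OF v(1) has_vector_derivative_const] .
        then show False using v n by simp
      qed
    qed
    then have "AE t in lebesgue. (t::real) \<notin> {0..1::real}" by (rule eventually_mono) auto
    then have "emeasure lebesgue {0..1::real} = 0"
      by (subst (asm) AE_iff_measurable[where N="{0..1}"]) auto
    then show False by simp
  qed
qed

lemma posdef_inv: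
  fixes M :: "real^'n^'n"
  assumes "sym_posdef M"
  shows "M *v (matrix_inv M *v x) = x" "matrix_inv M *v (M *v x) = x"
proof -
  have ker: "\<forall>x. M *v x = 0 \<longrightarrow> x = 0"
    using assms unfolding sym_posdef_def by force
  have "invertible M"
    using ker invertible_left_inverse matrix_left_invertible_ker by blast
  then have "\<exists>A'. M ** A' = mat 1 \<and> A' ** M = mat 1" unfolding invertible_def .
  then have inv: "M ** matrix_inv M = mat 1 \<and> matrix_inv M ** M = mat 1"
    unfolding matrix_inv_def by (rule someI_ex)
  show "M *v (matrix_inv M *v x) = x" "matrix_inv M *v (M *v x) = x"
    using inv by (simp_all add: matrix_vector_mul_assoc)
qed

lemma sym_inner:
  fixes M :: "real^'n^'n"
  assumes "transpose M = M"
  shows "x \<bullet> (M *v y) = y \<bullet> (M *v x)"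
proof -
  have "x \<bullet> (M *v y) = (x v* M) \<bullet> y" by (simp add: dot_lmul_matrix)
  also have "x v* M = M *v x" using vector_transpose_matrix[of x M] assms by simp
  finally show ?thesis by (simp add: inner_commute)
qed

lemma quad_expand:
  fixes M :: "real^'n^'n"
  assumes "transpose M = M"
  shows "(x - y) \<bullet> (M *v (x - y)) = x \<bullet> (M *v x) - 2 * (x \<bullet> (M *v y)) + y \<bullet> (M *v y)"
  using sym_inner[OF assms, of y x]
  by (simp add: matrix_vector_mult_diff_distrib inner_diff_left inner_diff_right)

lemma zero_tangent:
  assumes "x \<in> Z"
  shows "0 \<in> tangent_cone Z x"
  unfolding tangent_cone_def
  using assms LIMSEQ_inverse_real_of_nat
  by (auto intro!: exI[of _ "\<lambda>k. x"] exI[of _ "\<lambda>k. inverse (real (Suc k))"])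

lemma tangent_scale:
  assumes "v \<in> tangent_cone Z x" "c > 0"
  shows "c *\<^sub>R v \<in> tangent_cone Z x"
proof -
  obtain xs t where h: "x \<in> Z" "\<forall>k. xs k \<in> Z \<and> t k > 0" "xs \<longlonglongrightarrow> x" "t \<longlonglongrightarrow> 0"
    "(\<lambda>k. (1 / t k) *\<^sub>R (xs k - x)) \<longlonglongrightarrow> v"
    using assms(1) unfolding tangent_cone_def by blast
  have "(\<lambda>k. t k / c) \<longlonglongrightarrow> 0 / c" using h(4) assms(2) by (intro tendsto_intros) auto
  moreover have "(\<lambda>k. c *\<^sub>R ((1 / t k) *\<^sub>R (xs k - x))) \<longlonglongrightarrow> c *\<^sub>R v"
    using h(5) by (intro tendsto_intros)
  moreover have "\<And>k. c *\<^sub>R ((1 / t k) *\<^sub>R (xs k - x)) = (1 / (t k / c)) *\<^sub>R (xs k - x)"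
    by simp
  ultimately show ?thesis unfolding tangent_cone_def using h assms(2)
    by (auto intro!: exI[of _ xs] exI[of _ "\<lambda>k. t k / c"])
qed

lemma proj_normal:
  assumes "p \<in> proj Z z"
  shows "z - p \<in> normal_cone Z p"
  unfolding normal_cone_def
proof safe
  fix v assume "v \<in> tangent_cone Z p"
  then obtain xs t where h: "p \<in> Z" "\<forall>k. xs k \<in> Z \<and> t k > 0" "xs \<longlonglongrightarrow> p" "t \<longlonglongrightarrow> 0"
    "(\<lambda>k. (1 / t k) *\<^sub>R (xs k - p)) \<longlonglongrightarrow> v"
    unfolding tangent_cone_def by blast
  have ineq: "2 * ((z - p) \<bullet> ((1 / t k) *\<^sub>R (xs k - p))) \<le> norm (xs k - p) * norm ((1 / t k) *\<^sub>R (xs k - p))" for k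
  proof -
    have "dist z p \<le> dist z (xs k)" using assms h(2) unfolding proj_def by auto
    then have "norm (z - p) ^ 2 \<le> norm ((z - p) - (xs k - p)) ^ 2"
      by (simp add: dist_norm power_mono)
    also have "\<dots> = norm (z - p) ^ 2 - 2 * ((z - p) \<bullet> (xs k - p)) + norm (xs k - p) ^ 2"
      by (simp add: power2_norm_eq_inner inner_diff_left inner_diff_right inner_commute)
    finally have a: "2 * ((z - p) \<bullet> (xs k - p)) \<le> norm (xs k - p) ^ 2" by simp
    have tk: "t k > 0" using h(2) by simp
    have "2 * ((z - p) \<bullet> ((1 / t k) *\<^sub>R (xs k - p))) = (1 / t k) * (2 * ((z - p) \<bullet> (xs k - p)))"
      by simp
    also have "\<dots> \<le> (1 / t k) * norm (xs k - p) ^ 2"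
      using a tk by (intro mult_left_mono) auto
    also have "\<dots> = norm (xs k - p) * norm ((1 / t k) *\<^sub>R (xs k - p))"
      using tk by (simp add: power2_eq_square)
    finally show ?thesis .
  qed
  have l1: "(\<lambda>k. 2 * ((z - p) \<bullet> ((1 / t k) *\<^sub>R (xs k - p)))) \<longlonglongrightarrow> 2 * ((z - p) \<bullet> v)"
    using h(5) by (intro tendsto_intros)
  have xl: "(\<lambda>k. xs k - p) \<longlonglongrightarrow> p - p" using h(3) by (intro tendsto_intros)
  have "(\<lambda>k. norm (xs k - p) * norm ((1 / t k) *\<^sub>R (xs k - p))) \<longlonglongrightarrow> norm (p - p) * norm v"
    by (rule tendsto_mult[OF tendsto_norm[OF xl] tendsto_norm[OF h(5)]])
  then have l2: "(\<lambda>k. norm (xs k - p) * norm ((1 / t k) *\<^sub>R (xs k - p))) \<longlonglongrightarrow> 0" by simp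
  have "2 * ((z - p) \<bullet> v) \<le> 0"
    using l1 l2 ineq by (intro LIMSEQ_le[OF l1 l2]) auto
  then show "(z - p) \<bullet> v \<le> 0" by simp
qed


lemma proj_unique:
  assumes pr: "prox_regular \<alpha> Z" and a: "\<alpha> > 0"
    and p1: "p1 \<in> proj Z z" and p2: "p2 \<in> proj Z z" and d: "dist z p1 < 1 / (2 * \<alpha>)"
  shows "p1 = p2"
proof -
  have Z: "p1 \<in> Z" "p2 \<in> Z" using p1 p2 unfolding proj_def by auto
  have deq: "dist z p2 = dist z p1" using p1 p2 Z unfolding proj_def by (auto intro: antisym)
  have n1: "norm (z - p1) < 1 / (2 * \<alpha>)" using d by (simp add: dist_norm)
  have n2: "norm (z - p2) < 1 / (2 * \<alpha>)" using d deq by (simp add: dist_norm)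
  have i1: "(z - p1) \<bullet> (p2 - p1) \<le> \<alpha> * norm (z - p1) * (norm (p2 - p1))\<^sup>2"
    using pr Z proj_normal[OF p1] unfolding prox_regular_def by blast
  have i2: "(z - p2) \<bullet> (p1 - p2) \<le> \<alpha> * norm (z - p2) * (norm (p1 - p2))\<^sup>2"
    using pr Z proj_normal[OF p2] unfolding prox_regular_def by blast
  have s: "(z - p1) \<bullet> (p2 - p1) + (z - p2) \<bullet> (p1 - p2) = (norm (p2 - p1))\<^sup>2"
    by (simp add: power2_norm_eq_inner inner_diff_left inner_diff_right inner_commute)
  have "norm (p1 - p2) = norm (p2 - p1)" by (rule norm_minus_commute)
  then have i2': "(z - p2) \<bullet> (p1 - p2) \<le> \<alpha> * norm (z - p2) * (norm (p2 - p1))\<^sup>2"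
    using i2 by simp
  define D where "D = (norm (p2 - p1))\<^sup>2"
  define r where "r = \<alpha> * (norm (z - p1) + norm (z - p2))"
  have eqr: "r * D = \<alpha> * norm (z - p1) * D + \<alpha> * norm (z - p2) * D"
    unfolding r_def by (simp add: distrib_left distrib_right)
  have DD: "D \<le> r * D" using i1 i2' s eqr unfolding D_def by linarith
  have r1: "r < 1"
  proof -
    have "\<alpha> * (norm (z - p1) + norm (z - p2)) < \<alpha> * (1 / (2 * \<alpha>) + 1 / (2 * \<alpha>))"
      using n1 n2 a by (intro mult_strict_left_mono) auto
    also have "\<dots> = 1" using a by (simp add: field_simps)
    finally show ?thesis unfolding r_def .
  qed
  have "(1 - r) * D \<le> 0" using DD by (simp add: left_diff_distrib)
  then have "D \<le> 0" using r1 by (simp add: mult_le_0_iff)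
  then show ?thesis unfolding D_def by simp
qed

lemma in_proj_normal:
  assumes pr: "prox_regular \<alpha> Z" and a: "\<alpha> > 0" and x: "x \<in> Z"
    and eta: "\<eta> \<in> normal_cone Z x" and n: "norm \<eta> \<le> 1 / (2 * \<alpha>)"
  shows "x \<in> proj Z (x + \<eta>)"
  unfolding proj_def
proof (safe intro!: x)
  fix y assume y: "y \<in> Z"
  have i: "\<eta> \<bullet> (y - x) \<le> \<alpha> * norm \<eta> * (norm (y - x))\<^sup>2"
    using pr x eta y unfolding prox_regular_def by blast
  have "\<alpha> * norm \<eta> \<le> \<alpha> * (1 / (2 * \<alpha>))" using n a by (intro mult_left_mono) auto
  also have "\<dots> = 1 / 2" using a by simp
  finally have "\<alpha> * norm \<eta> * (norm (y - x))\<^sup>2 \<le> 1 / 2 * (norm (y - x))\<^sup>2"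
    by (intro mult_right_mono) auto
  with i have i2: "2 * (\<eta> \<bullet> (y - x)) \<le> (norm (y - x))\<^sup>2" by simp
  have "(norm (x + \<eta> - y))\<^sup>2 = (norm (\<eta> - (y - x)))\<^sup>2" by (simp add: algebra_simps)
  also have "\<dots> = (norm \<eta>)\<^sup>2 - 2 * (\<eta> \<bullet> (y - x)) + (norm (y - x))\<^sup>2"
    by (simp add: power2_norm_eq_inner inner_diff_left inner_diff_right inner_commute)
  finally have "(norm \<eta>)\<^sup>2 \<le> (norm (x + \<eta> - y))\<^sup>2" using i2 by simp
  then have "norm \<eta> \<le> norm (x + \<eta> - y)" by (rule power2_le_imp_le) simp
  then show "dist (x + \<eta>) x \<le> dist (x + \<eta>) y" by (simp add: dist_norm)
qed

theorem proposition6p1: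
  fixes Z :: "(real^'n) set" and \<alpha> :: real
    and G :: "real^'n \<Rightarrow> real^'n^'n" and f :: "real^'n \<Rightarrow> real^'n"
  assumes "closed Z" and "clarke_regular Z" and "\<alpha> > 0" and "prox_regular \<alpha> Z"
    and "\<forall>x \<in> Z. sym_posdef (G x)" and "continuous_on Z G"
    and "continuous_on Z f"
  shows "(\<forall>zbar \<in> Z. weak_equilibrium (proj_field Z G f) zbar \<longrightarrow>
            (\<exists>Ks > 0. \<forall>K. 0 < K \<and> K < Ks \<longrightarrow>
               (\<exists>zK. zK \<in> (\<lambda>\<eta>. zbar + \<eta>) ` (normal_cone Z zbar \<inter> ball 0 (1 / (2 * \<alpha>))) \<and>
                     weak_equilibrium (antiwindup Z G f K) zK)))
       \<and> (\<forall>K zK. K > 0 \<longrightarrow> (\<exists>z \<in> Z. \<exists>b \<in> ball 0 (1 / (2 * \<alpha>)). zK = z + b) \<longrightarrow>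
            weak_equilibrium (antiwindup Z G f K) zK \<longrightarrow>
            (\<forall>p \<in> proj Z zK. weak_equilibrium (proj_field Z G f) p))"
proof (intro conjI ballI impI allI)
  fix zbar assume zb: "zbar \<in> Z" and "weak_equilibrium (proj_field Z G f) zbar"
  then have "0 \<in> proj_field Z G f zbar" by (simp add: weq_iff)
  then have opt: "\<forall>w \<in> tangent_cone Z zbar. Gnorm (G zbar) (0 - f zbar) \<le> Gnorm (G zbar) (w - f zbar)"
    using zb unfolding proj_field_def by auto
  define M where "M = G zbar"
  define g where "g = M *v f zbar"
  have spd: "sym_posdef M" using assms(5) zb M_def by auto
  have symM: "transpose M = M" using spd unfolding sym_posdef_def by auto
  have gN: "g \<in> normal_cone Z zbar"
    unfolding normal_cone_def
  proof safe
    fix w assume w: "w \<in> tangent_cone Z zbar"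
    have key: "2 * t * (w \<bullet> g) \<le> t\<^sup>2 * (w \<bullet> (M *v w))" if t: "t > 0" for t
    proof -
      have "t *\<^sub>R w \<in> tangent_cone Z zbar" using tangent_scale[OF w t] .
      then have "Gnorm M (0 - f zbar) \<le> Gnorm M (t *\<^sub>R w - f zbar)" using opt unfolding M_def by blast
      moreover have "0 \<le> f zbar \<bullet> (M *v f zbar)"
      proof (cases "f zbar = 0")
        case False then show ?thesis using spd unfolding sym_posdef_def by (auto intro: less_imp_le)
      qed simp
      moreover have "(0 - f zbar) \<bullet> (M *v (0 - f zbar)) = f zbar \<bullet> (M *v f zbar)"
        using quad_expand[OF symM, of 0 "f zbar"] by simp
      ultimately have "(0 - f zbar) \<bullet> (M *v (0 - f zbar)) \<le> (t *\<^sub>R w - f zbar) \<bullet> (M *v (t *\<^sub>R w - f zbar))"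
        unfolding Gnorm_def using real_sqrt_le_iff by blast
      also have "\<dots> = t\<^sup>2 * (w \<bullet> (M *v w)) - 2 * t * (w \<bullet> g) + f zbar \<bullet> (M *v f zbar)"
        unfolding quad_expand[OF symM] g_def
        by (simp add: matrix_vector_mult_scaleR power2_eq_square)
      finally show ?thesis using quad_expand[OF symM, of 0 "f zbar"] by simp
    qed
    have "w \<bullet> g \<le> 0"
    proof (rule ccontr)
      assume pos: "\<not> w \<bullet> g \<le> 0"
      define c where "c = w \<bullet> g"
      define aa where "aa = w \<bullet> (M *v w)"
      have cp: "c > 0" using pos c_def by simp
      have k2: "2 * c \<le> t * aa" if t: "t > 0" for t
      proof -
        have "t * (2 * c) \<le> t * (t * aa)" using key[OF t] unfolding c_def aa_def
          by (simp add: power2_eq_square mult.assoc mult.left_commute)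
        then show ?thesis using t by simp
      qed
      define t where "t = c / (\<bar>aa\<bar> + 1)"
      have d: "\<bar>aa\<bar> + 1 > 0" by simp
      have tp: "t > 0" using cp d unfolding t_def by simp
      have te: "t * (\<bar>aa\<bar> + 1) = c" unfolding t_def using d by simp
      have "t * aa \<le> t * \<bar>aa\<bar>" using tp by (intro mult_left_mono) auto
      also have "\<dots> < t * (\<bar>aa\<bar> + 1)" using tp by simp
      finally have "t * aa < c" using te by simp
      then show False using k2[OF tp] cp by simp
    qed
    then show "g \<bullet> w \<le> 0" by (simp add: inner_commute)
  qed
  show "\<exists>Ks > 0. \<forall>K. 0 < K \<and> K < Ks \<longrightarrow>
               (\<exists>zK. zK \<in> (\<lambda>\<eta>. zbar + \<eta>) ` (normal_cone Z zbar \<inter> ball 0 (1 / (2 * \<alpha>))) \<and>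
                     weak_equilibrium (antiwindup Z G f K) zK)"
  proof (intro exI[of _ "1 / (2 * \<alpha> * (norm g + 1))"] conjI allI impI)
    have gp: "0 < norm g + 1" using norm_ge_zero[of g] by linarith
    show "1 / (2 * \<alpha> * (norm g + 1)) > 0" using assms(3) gp by simp
    fix K assume K: "0 < K \<and> K < 1 / (2 * \<alpha> * (norm g + 1))"
    have etaN: "K *\<^sub>R g \<in> normal_cone Z zbar"
      using gN K unfolding normal_cone_def by (auto simp: mult_nonneg_nonpos)
    have "norm (K *\<^sub>R g) = K * norm g" using K by simp
    also have "\<dots> \<le> K * (norm g + 1)" using K by simp
    also have "\<dots> < 1 / (2 * \<alpha>)"
    proof -
      have "K * (norm g + 1) < 1 / (2 * \<alpha> * (norm g + 1)) * (norm g + 1)"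
        using K gp by (intro mult_strict_right_mono) auto
      also have "\<dots> = 1 / (2 * \<alpha>)" using gp by simp
      finally show ?thesis .
    qed
    finally have nrm: "norm (K *\<^sub>R g) < 1 / (2 * \<alpha>)" .
    have pj: "zbar \<in> proj Z (zbar + K *\<^sub>R g)"
      using in_proj_normal[OF assms(4) assms(3) zb etaN] nrm by simp
    have "f zbar - (1 / K) *\<^sub>R (matrix_inv (G zbar) *v (zbar + K *\<^sub>R g - zbar)) = 0"
      using K posdef_inv(2)[OF spd] unfolding g_def M_def[symmetric]
      by (simp add: matrix_vector_mult_scaleR)
    then have "0 \<in> antiwindup Z G f K (zbar + K *\<^sub>R g)"
      unfolding antiwindup_def using pj by force
    then show "\<exists>zK. zK \<in> (\<lambda>\<eta>. zbar + \<eta>) ` (normal_cone Z zbar \<inter> ball 0 (1 / (2 * \<alpha>))) \<and>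
                     weak_equilibrium (antiwindup Z G f K) zK"
      using etaN nrm by (intro exI[of _ "zbar + K *\<^sub>R g"]) (auto simp: weq_iff)
  qed
next
  fix K zK p
  assume K: "K > 0" and zz: "\<exists>z \<in> Z. \<exists>b \<in> ball 0 (1 / (2 * \<alpha>)). zK = z + b"
    and we: "weak_equilibrium (antiwindup Z G f K) zK" and p: "p \<in> proj Z zK"
  obtain z b where z: "z \<in> Z" and b: "norm b < 1 / (2 * \<alpha>)" and zKd: "zK = z + b"
    using zz by auto
  obtain p0 where p0: "p0 \<in> proj Z zK"
    and eq0: "f p0 - (1 / K) *\<^sub>R (matrix_inv (G p0) *v (zK - p0)) = 0"
    using we unfolding weq_iff antiwindup_def by auto
  have "dist zK p \<le> dist zK z" using p z unfolding proj_def by auto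
  also have "\<dots> = norm b" using zKd by (simp add: dist_norm)
  finally have "dist zK p < 1 / (2 * \<alpha>)" using b by simp
  then have "p = p0" using proj_unique[OF assms(4) assms(3) p p0] by simp
  then have eq: "f p = (1 / K) *\<^sub>R (matrix_inv (G p) *v (zK - p))" using eq0 by simp
  have pZ: "p \<in> Z" using p unfolding proj_def by auto
  define M where "M = G p"
  have spd: "sym_posdef M" using assms(5) pZ M_def by auto
  have symM: "transpose M = M" using spd unfolding sym_posdef_def by auto
  have Mf: "M *v f p = (1 / K) *\<^sub>R (zK - p)"
    unfolding eq M_def by (simp add: matrix_vector_mult_scaleR posdef_inv(1)[OF spd[unfolded M_def]])
  have N: "zK - p \<in> normal_cone Z p" by (rule proj_normal[OF p])
  have "\<forall>w \<in> tangent_cone Z p. Gnorm M (0 - f p) \<le> Gnorm M (w - f p)"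
  proof
    fix w assume w: "w \<in> tangent_cone Z p"
    have wN: "w \<bullet> (zK - p) \<le> 0" using N w unfolding normal_cone_def by (auto simp: inner_commute)
    have wMf: "w \<bullet> (M *v f p) \<le> 0" unfolding Mf using wN K by (simp add: divide_nonpos_pos)
    have wMw: "w \<bullet> (M *v w) \<ge> 0"
      using spd unfolding sym_posdef_def by (cases "w = 0") (auto intro: less_imp_le)
    have "(0 - f p) \<bullet> (M *v (0 - f p)) = f p \<bullet> (M *v f p)"
      using quad_expand[OF symM, of 0 "f p"] by simp
    also have "\<dots> \<le> (w - f p) \<bullet> (M *v (w - f p))"
      unfolding quad_expand[OF symM] using wMf wMw by simp
    finally show "Gnorm M (0 - f p) \<le> Gnorm M (w - f p)"
      unfolding Gnorm_def by simp
  qed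
  then have "0 \<in> proj_field Z G f p"
    unfolding proj_field_def M_def using pZ zero_tangent[OF pZ] by simp
  then show "weak_equilibrium (proj_field Z G f) p" by (simp add: weq_iff)
qed

end
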